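(* Let $\tau$ be a primitive, aperiodic substitution and let $g_1,g_2$ be generators for $\tau$. Then $g_1^*\sim_o g_2^*$ if and only if $g_1\sim_G g_2$.
   Context: Let $\mathcal{A}$ be a finite nonempty alphabet, $\mathcal{A}^*$ the finite words over $\mathcal{A}$ (including the empty word), $\mathcal{A}^+$ the nonempty words, $|u|$ the length of $u$. A word $u$ is a factor of $v$ if $v=w_1uw_2$ for some words $w_1,w_2$. A substitution is a map $\tau:\mathcal{A}\to\mathcal{A}^+$ extended to a concatenation-respecting map on words and letterwise to sequences. For $x\in\mathcal{A}^{\mathbb{Z}}$, $x_{[i]}$ denotes the letter at index $i$ and $x_{[i,j]}$ the word $x_{[i]}\cdots x_{[j]}$. The language $\mathcal{L}(\tau)$ is the set of words that are factors of $\tau^n(a)$ for some letter $a$ and some $n\ge1$; $X_\tau=\{x\in\mathcal{A}^{\mathbb{Z}}: x_{[i,j]}\in\mathcal{L}(\tau)\ \forall i\le j\}$. $\tau$ is primitive if there is $n\ge1$ such that every letter $b$ is a factor of $\tau^n(a)$ for every letter $a$, and there is a letter $a$ such that for every $N$ there is $n$ with $|\tau^n(a)|>N$; a primitive $\tau$ is aperiodic if $X_\tau$ is infinite. A generator for $\tau$ is a triple $(v,u,w)$ with $v,u,w\in\mathcal{A}^+$, $u\in\mathcal{L}(\tau)$ and $\tau(u)=vuw$; $v$, $u$, $w$ are its left wing, center and right wing, and its length is $|u|$. Its completion $(v,u,w)^*\in X_\tau$ is the two-sided sequence $\cdots\tau^2(v)\tau(v)vu.w\tau(w)\tau^2(w)\cdots$,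 i.e. the left-infinite word $\cdots\tau^2(v)\tau(v)vu$ occupies the negative indices, ending at index $-1$, and the right-infinite word $w\tau(w)\tau^2(w)\cdots$ occupies the indices $\ge0$, starting at index $0$. If $(v,u,cw)$ is a generator with $c\in\mathcal{A}$, $w\in\mathcal{A}^*$, its right extension is the generator $(v,uc,w\tau(c))$; if $(vc,u,w)$ is a generator with $c\in\mathcal{A}$, $v\in\mathcal{A}^*$, its left extension is the generator $(\tau(c)v,cu,w)$. Two generators $g_1,g_2$ are G related ($g_1\sim_G g_2$) if there is a generator $g_3$ obtainable from $g_1$ and also from $g_2$ by finite (possibly empty) sequences of left and right extensions. For $x,y\in X_\tau$, $x\sim_o y$ (orbit equivalence) means there is $m\in\mathbb{Z}$ with $x_{[i]}=y_{[i+m]}$ for all $i\in\mathbb{Z}$. *)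

theory Defs
  imports Main
begin

definition substitution :: "('a \<Rightarrow> 'a list) \<Rightarrow> bool" where
  "substitution \<tau> \<longleftrightarrow> (\<forall>a. \<tau> a \<noteq> [])"

definition subst_word :: "('a \<Rightarrow> 'a list) \<Rightarrow> 'a list \<Rightarrow> 'a list" where
  "subst_word \<tau> w = concat (map \<tau> w)"

definition is_factor :: "'a list \<Rightarrow> 'a list \<Rightarrow> bool" where
  "is_factor u v \<longleftrightarrow> (\<exists>w1 w2. v = w1 @ u @ w2)"

definition language :: "('a \<Rightarrow> 'a list) \<Rightarrow> 'a list set" where
  "language \<tau> = {u. \<exists>a n. n \<ge> 1 \<and> is_factor u ((subst_word \<tau> ^^ n) [a])}"

definition seg :: "(int \<Rightarrow> 'a) \<Rightarrow> int \<Rightarrow> int \<Rightarrow> 'a list" where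
  "seg x i j = map x [i..j]"

definition shift_space :: "('a \<Rightarrow> 'a list) \<Rightarrow> (int \<Rightarrow> 'a) set" where
  "shift_space \<tau> = {x. \<forall>i j. i \<le> j \<longrightarrow> seg x i j \<in> language \<tau>}"

definition primitive :: "('a \<Rightarrow> 'a list) \<Rightarrow> bool" where
  "primitive \<tau> \<longleftrightarrow>
     (\<exists>n\<ge>1. \<forall>a b. b \<in> set ((subst_word \<tau> ^^ n) [a])) \<and>
     (\<exists>a. \<forall>N. \<exists>n. length ((subst_word \<tau> ^^ n) [a]) > N)"

definition aperiodic :: "('a \<Rightarrow> 'a list) \<Rightarrow> bool" where
  "aperiodic \<tau> \<longleftrightarrow> primitive \<tau> \<and> infinite (shift_space \<tau>)"

definition generator :: "('a \<Rightarrow> 'a list) \<Rightarrow> 'a list \<times> 'a list \<times> 'a list \<Rightarrow> bool" where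
  "generator \<tau> g \<longleftrightarrow> (case g of (v, u, w) \<Rightarrow>
     v \<noteq> [] \<and> u \<noteq> [] \<and> w \<noteq> [] \<and> u \<in> language \<tau> \<and> subst_word \<tau> u = v @ u @ w)"

text \<open>Finite prefixes of w \<tau>(w) \<tau>^2(w) ... and finite suffixes
  (ending with u) of ... \<tau>^2(v) \<tau>(v) v u.\<close>
definition right_word :: "('a \<Rightarrow> 'a list) \<Rightarrow> 'a list \<Rightarrow> nat \<Rightarrow> 'a list" where
  "right_word \<tau> w n = concat (map (\<lambda>i. (subst_word \<tau> ^^ i) w) [0..<n])"

definition left_word :: "('a \<Rightarrow> 'a list) \<Rightarrow> 'a list \<Rightarrow> 'a list \<Rightarrow> nat \<Rightarrow> 'a list" where
  "left_word \<tau> v u n = concat (map (\<lambda>i. (subst_word \<tau> ^^ i) v) (rev [0..<n])) @ u"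

text \<open>Completion: index i \<ge> 0 is the i-th letter (from 0) of w \<tau>(w) ...;
  index -m (m \<ge> 1) is the m-th letter from the right end of ... \<tau>(v) v u.\<close>
definition completion :: "('a \<Rightarrow> 'a list) \<Rightarrow> 'a list \<times> 'a list \<times> 'a list \<Rightarrow> int \<Rightarrow> 'a" where
  "completion \<tau> g = (case g of (v, u, w) \<Rightarrow> (\<lambda>i.
     if i \<ge> 0 then right_word \<tau> w (Suc (nat i)) ! nat i
     else rev (left_word \<tau> v u (nat (- i))) ! (nat (- i) - 1)))"

definition right_ext :: "('a \<Rightarrow> 'a list) \<Rightarrow> 'a list \<times> 'a list \<times> 'a list \<Rightarrow> 'a list \<times> 'a list \<times> 'a list \<Rightarrow> bool" where
  "right_ext \<tau> g g' \<longleftrightarrow> generator \<tau> g \<and>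
     (\<exists>v u c w. g = (v, u, c # w) \<and> g' = (v, u @ [c], w @ \<tau> c))"

definition left_ext :: "('a \<Rightarrow> 'a list) \<Rightarrow> 'a list \<times> 'a list \<times> 'a list \<Rightarrow> 'a list \<times> 'a list \<times> 'a list \<Rightarrow> bool" where
  "left_ext \<tau> g g' \<longleftrightarrow> generator \<tau> g \<and>
     (\<exists>v u c w. g = (v @ [c], u, w) \<and> g' = (\<tau> c @ v, c # u, w))"

definition G_related :: "('a \<Rightarrow> 'a list) \<Rightarrow> 'a list \<times> 'a list \<times> 'a list \<Rightarrow> 'a list \<times> 'a list \<times> 'a list \<Rightarrow> bool" where
  "G_related \<tau> g1 g2 \<longleftrightarrow> (\<exists>g3.
     (\<lambda>g g'. left_ext \<tau> g g' \<or> right_ext \<tau> g g')\<^sup>*\<^sup>* g1 g3 \<and>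
     (\<lambda>g g'. left_ext \<tau> g g' \<or> right_ext \<tau> g g')\<^sup>*\<^sup>* g2 g3)"

definition orbit_equiv :: "(int \<Rightarrow> 'a) \<Rightarrow> (int \<Rightarrow> 'a) \<Rightarrow> bool" where
  "orbit_equiv x y \<longleftrightarrow> (\<exists>m::int. \<forall>i. x i = y (i + m))"

end

theory Submission
  imports Defs
begin

lemma sw_append[simp]: "subst_word \<tau> (a @ b) = subst_word \<tau> a @ subst_word \<tau> b"
  by (simp add: subst_word_def)
lemma sw_Nil[simp]: "subst_word \<tau> [] = []" by (simp add: subst_word_def)
lemma sw_Cons: "subst_word \<tau> (c # w) = \<tau> c @ subst_word \<tau> w" by (simp add: subst_word_def)
lemma sw_single[simp]: "subst_word \<tau> [c] = \<tau> c" by (simp add: subst_word_def)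
lemma swn_append[simp]: "(subst_word \<tau> ^^ n) (a @ b) = (subst_word \<tau> ^^ n) a @ (subst_word \<tau> ^^ n) b"
  by (induction n) auto
lemma swn_Nil[simp]: "(subst_word \<tau> ^^ n) [] = []"
  by (induction n) auto

lemma sw_len: "substitution \<tau> \<Longrightarrow> length (subst_word \<tau> w) \<ge> length w"
proof (induction w)
  case (Cons c w)
  have "\<tau> c \<noteq> []" using Cons.prems by (simp add: substitution_def)
  then have "length (\<tau> c) \<ge> 1" by (cases "\<tau> c") auto
  then show ?case using Cons by (simp add: sw_Cons)
qed simp

lemma swn_len: "substitution \<tau> \<Longrightarrow> length ((subst_word \<tau> ^^ n) w) \<ge> length w"
  by (induction n) (auto intro: le_trans sw_len)

lemma rw_0[simp]: "right_word \<tau> w 0 = []" by (simp add: right_word_def)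
lemma rw_Suc: "right_word \<tau> w (Suc n) = right_word \<tau> w n @ (subst_word \<tau> ^^ n) w"
  by (simp add: right_word_def)
lemma rw_Suc': "right_word \<tau> w (Suc n) = w @ subst_word \<tau> (right_word \<tau> w n)"
proof (induction n)
  case 0 then show ?case by (simp add: rw_Suc)
next
  case (Suc n)
  show ?case by (subst rw_Suc, subst Suc, simp add: rw_Suc)
qed

lemma rw_len: "substitution \<tau> \<Longrightarrow> w \<noteq> [] \<Longrightarrow> length (right_word \<tau> w n) \<ge> n"
proof (induction n)
  case (Suc n)
  have "length ((subst_word \<tau> ^^ n) w) \<ge> length w" using swn_len Suc.prems by blast
  moreover have "length w \<ge> 1" using Suc.prems by (cases w) auto
  ultimately show ?case using Suc by (simp add: rw_Suc)
qed simp

lemma rw_prefix: "n \<le> m \<Longrightarrow> \<exists>s. right_word \<tau> w m = right_word \<tau> w n @ s"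
proof (induction m rule: dec_induct)
  case (step m) then show ?case by (auto simp: rw_Suc)
qed simp

lemma lw_Suc: "left_word \<tau> v u (Suc n) = (subst_word \<tau> ^^ n) v @ left_word \<tau> v u n"
  by (simp add: left_word_def)
lemma lw_0[simp]: "left_word \<tau> v u 0 = u" by (simp add: left_word_def)

lemma lw_len: "substitution \<tau> \<Longrightarrow> v \<noteq> [] \<Longrightarrow> length (left_word \<tau> v u n) \<ge> n + length u"
proof (induction n)
  case (Suc n)
  have "length ((subst_word \<tau> ^^ n) v) \<ge> length v" using swn_len Suc.prems by blast
  moreover have "length v \<ge> 1" using Suc.prems by (cases v) auto
  ultimately show ?case using Suc by (simp add: lw_Suc)
qed simp

lemma lw_prefix: "n \<le> m \<Longrightarrow> \<exists>s. rev (left_word \<tau> v u m) = rev (left_word \<tau> v u n) @ s"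
proof (induction m rule: dec_induct)
  case (step m) then show ?case by (auto simp: lw_Suc)
qed simp

lemma comp_right:
  assumes "substitution \<tau>" "w \<noteq> []" "j < length (right_word \<tau> w n)"
  shows "completion \<tau> (v,u,w) (int j) = right_word \<tau> w n ! j"
proof -
  define m where "m = max n (Suc j)"
  obtain s1 where s1: "right_word \<tau> w m = right_word \<tau> w (Suc j) @ s1"
    using rw_prefix[of "Suc j" m] m_def by auto
  obtain s2 where s2: "right_word \<tau> w m = right_word \<tau> w n @ s2"
    using rw_prefix[of n m] m_def by auto
  have l: "j < length (right_word \<tau> w (Suc j))" using rw_len[OF assms(1,2), of "Suc j"] by simp
  have "completion \<tau> (v,u,w) (int j) = right_word \<tau> w (Suc j) ! j"
    by (simp add: completion_def)
  also have "\<dots> = right_word \<tau> w m ! j" using s1 l by (simp add: nth_append)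
  also have "\<dots> = right_word \<tau> w n ! j" using s2 assms(3) by (simp add: nth_append)
  finally show ?thesis .
qed

lemma comp_left:
  assumes "substitution \<tau>" "v \<noteq> []" "k < length (left_word \<tau> v u n)"
  shows "completion \<tau> (v,u,w) (- int k - 1) = rev (left_word \<tau> v u n) ! k"
proof -
  define m where "m = max n (Suc k)"
  obtain s1 where s1: "rev (left_word \<tau> v u m) = rev (left_word \<tau> v u (Suc k)) @ s1"
    using lw_prefix[of "Suc k" m \<tau> v u] m_def by auto
  obtain s2 where s2: "rev (left_word \<tau> v u m) = rev (left_word \<tau> v u n) @ s2"
    using lw_prefix[of n m \<tau> v u] m_def by auto
  have l: "k < length (left_word \<tau> v u (Suc k))" using lw_len[OF assms(1,2), of "Suc k" u] by simp
  have e: "nat (1 + int k) = Suc k" by simp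
  have "completion \<tau> (v,u,w) (- int k - 1) = rev (left_word \<tau> v u (Suc k)) ! k"
    by (simp add: completion_def e)
  also have "\<dots> = rev (left_word \<tau> v u m) ! k" using s1 l by (simp add: nth_append)
  also have "\<dots> = rev (left_word \<tau> v u n) ! k" using s2 assms(3) by (simp add: nth_append)
  finally show ?thesis .
qed


lemma factor_trans: "is_factor a b \<Longrightarrow> is_factor b c \<Longrightarrow> is_factor a c"
proof -
  assume "is_factor a b" "is_factor b c"
  then obtain p q r t where "b = p @ a @ q" "c = r @ b @ t" unfolding is_factor_def by blast
  then show ?thesis unfolding is_factor_def
    by (rule_tac x="r @ p" in exI, rule_tac x="q @ t" in exI) simp
qed

lemma lang_factor: "is_factor s u \<Longrightarrow> u \<in> language \<tau> \<Longrightarrow> s \<in> language \<tau>"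
  unfolding language_def using factor_trans by blast

lemma factor_sw: "is_factor a b \<Longrightarrow> is_factor (subst_word \<tau> a) (subst_word \<tau> b)"
proof -
  assume "is_factor a b"
  then obtain w1 w2 where "b = w1 @ a @ w2" unfolding is_factor_def by blast
  then show ?thesis unfolding is_factor_def
    by (rule_tac x="subst_word \<tau> w1" in exI, rule_tac x="subst_word \<tau> w2" in exI) simp
qed

lemma lang_sw: "u \<in> language \<tau> \<Longrightarrow> subst_word \<tau> u \<in> language \<tau>"
proof -
  assume "u \<in> language \<tau>"
  then obtain a n where "n \<ge> 1" "is_factor u ((subst_word \<tau> ^^ n) [a])"
    unfolding language_def by blast
  then have "is_factor (subst_word \<tau> u) ((subst_word \<tau> ^^ Suc n) [a])"
    using factor_sw by simp
  then show ?thesis unfolding language_def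
    by (rule_tac CollectI, rule_tac x=a in exI, rule_tac x="Suc n" in exI) simp
qed

lemma gen_right:
  assumes "generator \<tau> (v,u,c#w)" "substitution \<tau>"
  shows "generator \<tau> (v,u@[c],w@\<tau> c)"
proof -
  have g: "v \<noteq> []" "u \<noteq> []" "u \<in> language \<tau>" "subst_word \<tau> u = v @ u @ c # w"
    using assms(1) by (auto simp: generator_def)
  have "is_factor (u@[c]) (subst_word \<tau> u)" using g(4) unfolding is_factor_def
    by (rule_tac x=v in exI, rule_tac x=w in exI) simp
  then have "u@[c] \<in> language \<tau>" using lang_factor lang_sw g(3) by blast
  moreover have "\<tau> c \<noteq> []" using assms(2) by (simp add: substitution_def)
  ultimately show ?thesis using g by (simp add: generator_def)
qed

lemma gen_left:
  assumes "generator \<tau> (v@[c],u,w)" "substitution \<tau>"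
  shows "generator \<tau> (\<tau> c @ v, c#u, w)"
proof -
  have g: "w \<noteq> []" "u \<noteq> []" "u \<in> language \<tau>" "subst_word \<tau> u = v @ c # u @ w"
    using assms(1) by (auto simp: generator_def)
  have "is_factor (c#u) (subst_word \<tau> u)" using g(4) unfolding is_factor_def
    by (rule_tac x=v in exI, rule_tac x=w in exI) simp
  then have "c#u \<in> language \<tau>" using lang_factor lang_sw g(3) by blast
  moreover have "\<tau> c \<noteq> []" using assms(2) by (simp add: substitution_def)
  ultimately show ?thesis using g by (simp add: generator_def sw_Cons)
qed

lemma rw_rext:
  fixes \<tau> :: "'a \<Rightarrow> 'a list" and c :: 'a and n :: nat
  shows "c # right_word \<tau> (w @ \<tau> c) n = right_word \<tau> (c#w) n @ (subst_word \<tau> ^^ n) [c]"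
proof (induction n)
  case (Suc n)
  have a: "(subst_word \<tau> ^^ n) (c#w) = (subst_word \<tau> ^^ n) [c] @ (subst_word \<tau> ^^ n) w"
    using swn_append[of n \<tau> "[c]" w] by simp
  have b: "(subst_word \<tau> ^^ n) (\<tau> c) = (subst_word \<tau> ^^ Suc n) [c]"
    by (simp add: funpow_Suc_right del: funpow.simps)
  show ?case using Suc by (simp add: rw_Suc a b)
qed simp

lemma lw_rext: "left_word \<tau> v (u@[c]) n = left_word \<tau> v u n @ [c]"
  by (simp add: left_word_def)

lemma comp_rext:
  assumes "substitution \<tau>" "v \<noteq> []"
  shows "completion \<tau> (v,u@[c],w@\<tau> c) i = completion \<tau> (v,u,c#w) (i+1)"
proof -
  have tc: "\<tau> c \<noteq> []" using assms(1) by (simp add: substitution_def)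
  consider (pos) j where "i = int j" | (m1) "i = -1" | (neg) k where "i = - int (Suc k) - 1"
  proof (cases "i \<ge> 0")
    case True then show ?thesis using that(1)[of "nat i"] by simp
  next
    case False
    show ?thesis
    proof (cases "i = -1")
      case True then show ?thesis using that(2) by simp
    next
      case False
      then have "i = - int (Suc (nat (- i - 2))) - 1" using \<open>\<not> i \<ge> 0\<close> by simp
      then show ?thesis using that(3) by blast
    qed
  qed
  then show ?thesis
  proof cases
    case pos
    let ?N = "Suc (Suc j)"
    have l1: "j < length (right_word \<tau> (w@\<tau> c) ?N)"
      using rw_len[OF assms(1), of "w@\<tau> c" ?N] tc by simp
    have l2: "Suc j < length (right_word \<tau> (c#w) ?N)"
      using rw_len[OF assms(1), of "c#w" ?N] by simp
    have "completion \<tau> (v,u@[c],w@\<tau> c) i = right_word \<tau> (w@\<tau> c) ?N ! j"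
      using comp_right[OF assms(1) _ l1] tc pos by simp
    also have "\<dots> = (c # right_word \<tau> (w@\<tau> c) ?N) ! Suc j" by simp
    also have "\<dots> = right_word \<tau> (c#w) ?N ! Suc j" unfolding rw_rext using l2 by (simp add: nth_append)
    also have "\<dots> = completion \<tau> (v,u,c#w) (int (Suc j))"
      using comp_right[OF assms(1) _ l2] by simp
    finally show ?thesis using pos by (simp add: add.commute)
  next
    case m1
    have "completion \<tau> (v,u@[c],w@\<tau> c) (- int 0 - 1) = rev (left_word \<tau> v (u@[c]) 0) ! 0"
      by (rule comp_left[OF assms]) simp
    moreover have "completion \<tau> (v,u,c#w) (int 0) = right_word \<tau> (c#w) 1 ! 0"
      by (rule comp_right[OF assms(1)]) (simp_all add: rw_Suc)
    ultimately show ?thesis using m1 by (simp add: rw_Suc)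
  next
    case neg
    let ?N = "Suc (Suc k)"
    have l1: "Suc k < length (left_word \<tau> v (u@[c]) ?N)"
      using lw_len[OF assms, of ?N "u@[c]"] by simp
    have l2: "k < length (left_word \<tau> v u ?N)"
      using lw_len[OF assms, of ?N u] by simp
    have "completion \<tau> (v,u@[c],w@\<tau> c) i = rev (left_word \<tau> v (u@[c]) ?N) ! Suc k"
      using comp_left[OF assms l1] neg by simp
    also have "\<dots> = rev (left_word \<tau> v u ?N) ! k" by (simp add: lw_rext)
    also have "\<dots> = completion \<tau> (v,u,c#w) (- int k - 1)"
      using comp_left[OF assms l2] by simp
    also have "- int k - 1 = i + 1" using neg by simp
    finally show ?thesis .
  qed
qed

lemma lw_lext: "left_word \<tau> (\<tau> c @ v) (c#u) n = (subst_word \<tau> ^^ n) [c] @ left_word \<tau> (v@[c]) u n"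
proof (induction n)
  case 0 then show ?case by simp
next
  case (Suc n)
  have b: "(subst_word \<tau> ^^ n) (\<tau> c) = (subst_word \<tau> ^^ Suc n) [c]"
    by (simp add: funpow_Suc_right del: funpow.simps)
  show ?case using Suc by (simp add: lw_Suc b del: funpow.simps)
qed

lemma comp_lext:
  assumes "substitution \<tau>"
  shows "completion \<tau> (\<tau> c @ v, c#u, w) = completion \<tau> (v@[c],u,w)"
proof
  fix i
  show "completion \<tau> (\<tau> c @ v, c#u, w) i = completion \<tau> (v@[c],u,w) i"
  proof (cases "i \<ge> 0")
    case True then show ?thesis by (simp add: completion_def)
  next
    case False
    have "length (left_word \<tau> (v@[c]) u (nat (-i))) \<ge> nat (-i) + length u"
      using lw_len[OF assms, of "v@[c]"] by simp
    moreover have "nat (-i) \<ge> 1" using False by simp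
    ultimately have "nat (-i) - 1 < length (left_word \<tau> (v@[c]) u (nat (-i)))" by linarith
    then show ?thesis using False by (simp add: completion_def lw_lext nth_append)
  qed
qed

lemma fin_periodic:
  fixes R :: "nat \<Rightarrow> 'a"
  assumes d: "d > 0" and perR: "\<forall>i\<ge>B. R (i+d) = R i"
    and occ: "\<forall>s\<in>language \<tau>. \<exists>p\<ge>B. \<forall>k<length s. R (p+k) = s!k"
  shows "finite (shift_space \<tau>)"
proof -
  have per: "R a = R (B + (a - B) mod d)" if "a \<ge> B" for a
    using that
  proof (induction a rule: less_induct)
    case (less a)
    show ?case
    proof (cases "a - B < d")
      case True then show ?thesis using less.prems by simp
    next
      case False
      define a' where "a' = a - d"
      have a': "a = a' + d" "a' \<ge> B" "a' < a" using False d less.prems unfolding a'_def by auto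
      have "R a = R a'" using perR a' by simp
      also have "\<dots> = R (B + (a' - B) mod d)" using less.IH a' by blast
      also have "(a' - B) mod d = (a - B) mod d"
      proof -
        have "a - B = (a' - B) + d" using a' by simp
        then show ?thesis by simp
      qed
      finally show ?thesis .
    qed
  qed
  have per2: "R (p + t) = R (B + ((p - B) mod d + t) mod d)" if "p \<ge> B" for p t
  proof -
    have "R (p + t) = R (B + (p + t - B) mod d)" by (rule per) (use that in simp)
    also have "(p + t - B) mod d = ((p - B) mod d + t) mod d" using that
      by (simp add: mod_add_left_eq)
    finally show ?thesis .
  qed
  define F where "F = (\<lambda>q (i::int). R (B + (q + nat (i mod int d)) mod d))"
  have "shift_space \<tau> \<subseteq> F ` {..<d}"
  proof
    fix z assume z: "z \<in> shift_space \<tau>"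
    have occz: "\<exists>p\<ge>B. \<forall>k<nat (j - i + 1). R (p+k) = z (i + int k)" if "i \<le> j" for i j
    proof -
      have "seg z i j \<in> language \<tau>" using z that by (simp add: shift_space_def)
      then obtain p where p: "p \<ge> B" "\<forall>k<length (seg z i j). R (p+k) = seg z i j ! k"
        using occ by blast
      have "R (p+k) = z (i + int k)" if "k < nat (j - i + 1)" for k
        using p(2)[rule_format, of k] that by (simp add: seg_def)
      then show ?thesis using p(1) by blast
    qed
    have zper: "z (i + int d) = z i" for i
    proof -
      obtain p where p: "p \<ge> B" "\<forall>k<nat (i + int d - i + 1). R (p+k) = z (i + int k)"
        using occz[of i "i + int d"] by auto
      have "z i = R p" using p(2)[rule_format, of 0] by simp
      moreover have "z (i + int d) = R (p + d)" using p(2)[rule_format, of d] by simp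
      ultimately show ?thesis using perR p(1) by simp
    qed
    have zn: "z (j + int n * int d) = z j" for j n
    proof (induction n)
      case (Suc n)
      have "z (j + int (Suc n) * int d) = z ((j + int n * int d) + int d)"
        by (simp add: algebra_simps)
      then show ?case using zper Suc by simp
    qed simp
    have zmod: "z i = z (i mod int d)" for i
    proof -
      have dm: "i = i mod int d + (i div int d) * int d" by simp
      show ?thesis
      proof (cases "i div int d \<ge> 0")
        case True
        then have "i div int d = int (nat (i div int d))" by simp
        then have "i = i mod int d + int (nat (i div int d)) * int d" using dm by simp
        then show ?thesis using zn[of "i mod int d" "nat (i div int d)"] by simp
      next
        case False
        then have "- (i div int d) = int (nat (- (i div int d)))" by simp
        moreover have "i mod int d = i + (- (i div int d)) * int d" using dm by linarith
        ultimately have "i mod int d = i + int (nat (- (i div int d))) * int d" by simp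
        then show ?thesis using zn[of i "nat (- (i div int d))"] by simp
      qed
    qed
    obtain p0 where p0: "p0 \<ge> B" "\<forall>k<nat (int d - 1 - 0 + 1). R (p0+k) = z (0 + int k)"
      using occz[of 0 "int d - 1"] d by auto
    have "z = F ((p0 - B) mod d)"
    proof
      fix i
      have m: "nat (i mod int d) < d" using d by (simp add: nat_less_iff)
      have "z i = z (int (nat (i mod int d)))" using zmod d by simp
      also have "\<dots> = R (p0 + nat (i mod int d))" using p0(2) m d by simp
      also have "\<dots> = R (B + ((p0 - B) mod d + nat (i mod int d)) mod d)" by (rule per2[OF p0(1)])
      also have "\<dots> = F ((p0 - B) mod d) i" by (simp add: F_def)
      finally show "z i = F ((p0 - B) mod d) i" .
    qed
    then show "z \<in> F ` {..<d}" using d by simp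
  qed
  then show ?thesis using finite_subset by blast
qed

lemma occ_lang:
  assumes sub: "substitution \<tau>" and prim: "primitive \<tau>" and gen: "generator \<tau> (v,u,w)"
    and s: "s \<in> language \<tau>"
  shows "\<exists>p\<ge>length w. \<forall>k<length s. completion \<tau> (v,u,w) (int (p+k)) = s!k"
proof -
  obtain a n where n: "n \<ge> 1" and f: "is_factor s ((subst_word \<tau> ^^ n) [a])"
    using s unfolding language_def by blast
  obtain s1 s2 where s12: "(subst_word \<tau> ^^ n) [a] = s1 @ s @ s2"
    using f unfolding is_factor_def by blast
  obtain N where N: "N \<ge> 1" "\<forall>a b. b \<in> set ((subst_word \<tau> ^^ N) [a])"
    using prim unfolding primitive_def by blast
  have wne: "w \<noteq> []" using gen by (simp add: generator_def)
  then obtain b w' where w: "w = b # w'" by (cases w) auto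
  have "a \<in> set ((subst_word \<tau> ^^ N) [b])" using N by blast
  then obtain P Q where PQ: "(subst_word \<tau> ^^ N) [b] = P @ a # Q" by (meson split_list)
  define M where "M = n + N"
  have "(subst_word \<tau> ^^ M) [b] = (subst_word \<tau> ^^ n) ((subst_word \<tau> ^^ N) [b])"
    by (simp add: M_def funpow_add)
  also have "\<dots> = (subst_word \<tau> ^^ n) P @ (subst_word \<tau> ^^ n) ([a] @ Q)"
    unfolding PQ by simp
  also have "\<dots> = (subst_word \<tau> ^^ n) P @ s1 @ s @ s2 @ (subst_word \<tau> ^^ n) Q"
    unfolding swn_append s12 by simp
  finally have TM: "(subst_word \<tau> ^^ M) [b] = (subst_word \<tau> ^^ n) P @ s1 @ s @ s2 @ (subst_word \<tau> ^^ n) Q" .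
  have Tw: "(subst_word \<tau> ^^ M) w = (subst_word \<tau> ^^ M) [b] @ (subst_word \<tau> ^^ M) w'"
    using w swn_append[of M \<tau> "[b]" w'] by simp
  define X where "X = right_word \<tau> w M @ (subst_word \<tau> ^^ n) P @ s1"
  define Y where "Y = s2 @ (subst_word \<tau> ^^ n) Q @ (subst_word \<tau> ^^ M) w'"
  have rw: "right_word \<tau> w (Suc M) = X @ s @ Y"
    unfolding rw_Suc Tw TM X_def Y_def by simp
  have "M = Suc (M - 1)" using n M_def by simp
  then obtain M' where M': "M = Suc M'" by blast
  have "length X \<ge> length w" unfolding X_def M' rw_Suc' by simp
  moreover have "\<forall>k<length s. completion \<tau> (v,u,w) (int (length X+k)) = s!k"
  proof (intro allI impI)
    fix k assume k: "k < length s"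
    have l: "length X + k < length (right_word \<tau> w (Suc M))" using rw k by simp
    have "completion \<tau> (v,u,w) (int (length X+k)) = right_word \<tau> w (Suc M) ! (length X + k)"
      by (rule comp_right[OF sub wne l])
    also have "\<dots> = s ! k" using rw k by (simp add: nth_append)
    finally show "completion \<tau> (v,u,w) (int (length X+k)) = s!k" .
  qed
  ultimately show ?thesis by blast
qed

lemma tau_shift:
  assumes sub: "substitution \<tau>" and gen: "generator \<tau> (v,u,w)" and jK: "j < K"
  shows "completion \<tau> (v,u,w) (int (length w + j)) =
    subst_word \<tau> (map (\<lambda>k. completion \<tau> (v,u,w) (int k)) [0..<K]) ! j"
proof -
  have wne: "w \<noteq> []" using gen by (simp add: generator_def)
  define r where "r = right_word \<tau> w K"
  define p where "p = map (\<lambda>k. completion \<tau> (v,u,w) (int k)) [0..<K]"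
  have lr: "length r \<ge> K" unfolding r_def using rw_len[OF sub wne] by blast
  have "p = take K r"
  proof (rule nth_equalityI)
    show "length p = length (take K r)" using lr by (simp add: p_def)
    fix k assume "k < length p"
    then have k: "k < K" by (simp add: p_def)
    then have "k < length r" using lr by simp
    then have "completion \<tau> (v,u,w) (int k) = r ! k" unfolding r_def by (rule comp_right[OF sub wne])
    then show "p ! k = take K r ! k" using k by (simp add: p_def)
  qed
  then have rp: "r = p @ drop K r" by simp
  have lp: "length (subst_word \<tau> p) \<ge> K" using sw_len[OF sub, of p] by (simp add: p_def)
  have Tr: "subst_word \<tau> r = subst_word \<tau> p @ subst_word \<tau> (drop K r)"
    by (subst rp) simp
  have rs: "right_word \<tau> w (Suc K) = w @ subst_word \<tau> p @ subst_word \<tau> (drop K r)"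
    using rw_Suc'[of \<tau> w K] Tr r_def by simp
  have l: "length w + j < length (right_word \<tau> w (Suc K))" using rs lp jK by simp
  have "completion \<tau> (v,u,w) (int (length w + j)) = right_word \<tau> w (Suc K) ! (length w + j)"
    by (rule comp_right[OF sub wne l])
  also have "\<dots> = subst_word \<tau> p ! j" using rs lp jK by (simp add: nth_append)
  finally show ?thesis by (simp add: p_def)
qed

lemma contra:
  assumes sub: "substitution \<tau>" and prim: "primitive \<tau>"
    and gen1: "generator \<tau> (v1,u1,w1)" and gen2: "generator \<tau> (v2,u2,w2)"
    and eq: "completion \<tau> (v1,u1,w1) = completion \<tau> (v2,u2,w2)"
    and lt: "length w2 < length w1"
  shows "finite (shift_space \<tau>)"
proof -
  define R where "R = (\<lambda>j::nat. completion \<tau> (v2,u2,w2) (int j))"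
  define d where "d = length w1 - length w2"
  define B where "B = length w2"
  have sh: "R (length w1 + j) = R (length w2 + j)" for j
  proof -
    have "R (length w1 + j) = subst_word \<tau> (map (\<lambda>k. completion \<tau> (v1,u1,w1) (int k)) [0..<Suc j]) ! j"
      unfolding R_def eq[symmetric] by (rule tau_shift[OF sub gen1]) simp
    also have "\<dots> = R (length w2 + j)"
      unfolding R_def eq by (rule tau_shift[OF sub gen2, symmetric]) simp
    finally show ?thesis .
  qed
  have perR: "\<forall>i\<ge>B. R (i+d) = R i"
  proof (intro allI impI)
    fix i assume i: "B \<le> i"
    have "R (i + d) = R (length w1 + (i - B))" using i lt by (simp add: d_def B_def add.commute)
    also have "\<dots> = R (length w2 + (i - B))" by (rule sh)
    also have "\<dots> = R i" using i by (simp add: B_def)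
    finally show "R (i + d) = R i" .
  qed
  have occ: "\<forall>s\<in>language \<tau>. \<exists>p\<ge>B. \<forall>k<length s. R (p+k) = s!k"
    unfolding R_def B_def using occ_lang[OF sub prim gen2] by blast
  show ?thesis by (rule fin_periodic[of d B R]) (use lt perR occ d_def in auto)
qed

abbreviation extrel :: "('a \<Rightarrow> 'a list) \<Rightarrow> 'a list \<times> 'a list \<times> 'a list \<Rightarrow> 'a list \<times> 'a list \<times> 'a list \<Rightarrow> bool" where
  "extrel \<tau> \<equiv> (\<lambda>g g'. left_ext \<tau> g g' \<or> right_ext \<tau> g g')"

lemma ext_comp:
  assumes sub: "substitution \<tau>" and r: "(extrel \<tau>)\<^sup>*\<^sup>* g g'" and gen: "generator \<tau> g"
  shows "generator \<tau> g' \<and> (\<exists>n::nat. \<forall>i. completion \<tau> g' i = completion \<tau> g (i + int n))"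
  using r
proof (induction rule: rtranclp_induct)
  case base
  show ?case using gen by (intro conjI exI[of _ 0]) simp_all
next
  case (step g1 g2)
  from step.IH obtain n where gen1: "generator \<tau> g1"
    and sh: "\<forall>i. completion \<tau> g1 i = completion \<tau> g (i + int n)" by blast
  from step.hyps(2) show ?case
  proof
    assume "left_ext \<tau> g1 g2"
    then obtain v u c w where e: "g1 = (v@[c],u,w)" "g2 = (\<tau> c @ v, c#u, w)"
      unfolding left_ext_def by blast
    have "generator \<tau> g2" using gen_left[OF _ sub] gen1 e by simp
    moreover have "completion \<tau> g2 = completion \<tau> g1" using comp_lext[OF sub] e by simp
    ultimately show ?case using sh by auto
  next
    assume "right_ext \<tau> g1 g2"
    then obtain v u c w where e: "g1 = (v,u,c#w)" "g2 = (v,u@[c],w@\<tau> c)"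
      unfolding right_ext_def by blast
    have vne: "v \<noteq> []" using gen1 e by (simp add: generator_def)
    have "generator \<tau> g2" using gen_right[OF _ sub] gen1 e by simp
    moreover have "\<forall>i. completion \<tau> g2 i = completion \<tau> g (i + int (Suc n))"
    proof
      fix i
      have "completion \<tau> g2 i = completion \<tau> g1 (i + 1)" using comp_rext[OF sub vne] e by simp
      also have "\<dots> = completion \<tau> g (i + 1 + int n)" using sh by simp
      finally show "completion \<tau> g2 i = completion \<tau> g (i + int (Suc n))" by (simp add: add.assoc)
    qed
    ultimately show ?case by blast
  qed
qed

lemma rext_n:
  assumes sub: "substitution \<tau>" and gen: "generator \<tau> g"
  shows "\<exists>g'. (extrel \<tau>)\<^sup>*\<^sup>* g g' \<and> generator \<tau> g' \<and> (\<forall>i. completion \<tau> g' i = completion \<tau> g (i + int n))"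
proof (induction n)
  case 0 show ?case using gen by (intro exI[of _ g]) simp
next
  case (Suc n)
  then obtain g' where r: "(extrel \<tau>)\<^sup>*\<^sup>* g g'" and gen': "generator \<tau> g'"
    and sh: "\<forall>i. completion \<tau> g' i = completion \<tau> g (i + int n)" by blast
  obtain v u w where g': "g' = (v,u,w)" by (cases g') auto
  have ne: "v \<noteq> []" "w \<noteq> []" using gen' g' by (auto simp: generator_def)
  then obtain c w' where w: "w = c # w'" by (cases w) auto
  define g'' where "g'' = (v,u@[c],w'@\<tau> c)"
  have re: "right_ext \<tau> g' g''" unfolding right_ext_def g''_def g' w using gen' g' w by auto
  have "generator \<tau> g''" using gen_right[OF _ sub] gen' g' w g''_def by simp
  moreover have "(extrel \<tau>)\<^sup>*\<^sup>* g g''" using r re by (simp add: rtranclp.rtrancl_into_rtrancl)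
  moreover have "\<forall>i. completion \<tau> g'' i = completion \<tau> g (i + int (Suc n))"
  proof
    fix i
    have "completion \<tau> g'' i = completion \<tau> g' (i + 1)" unfolding g''_def g' w
      by (rule comp_rext[OF sub ne(1)])
    also have "\<dots> = completion \<tau> g (i + 1 + int n)" using sh by simp
    finally show "completion \<tau> g'' i = completion \<tau> g (i + int (Suc n))" by (simp add: add.assoc)
  qed
  ultimately show ?case by blast
qed

lemma lext_n:
  assumes sub: "substitution \<tau>" and gen: "generator \<tau> (v,u,w)"
  shows "\<exists>v' u'. (extrel \<tau>)\<^sup>*\<^sup>* (v,u,w) (v',u',w) \<and> generator \<tau> (v',u',w) \<and>
     length u' = length u + n \<and> completion \<tau> (v',u',w) = completion \<tau> (v,u,w)"
proof (induction n)
  case 0 show ?case using gen by (intro exI[of _ v] exI[of _ u]) simp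
next
  case (Suc n)
  then obtain v' u' where r: "(extrel \<tau>)\<^sup>*\<^sup>* (v,u,w) (v',u',w)" and gen': "generator \<tau> (v',u',w)"
    and l: "length u' = length u + n" and c: "completion \<tau> (v',u',w) = completion \<tau> (v,u,w)" by blast
  have "v' \<noteq> []" using gen' by (simp add: generator_def)
  then obtain v'' c where v': "v' = v'' @ [c]" by (cases v' rule: rev_cases) auto
  have le: "left_ext \<tau> (v',u',w) (\<tau> c @ v'', c#u', w)" unfolding left_ext_def using gen' v' by auto
  have "generator \<tau> (\<tau> c @ v'', c#u', w)" using gen_left[OF _ sub] gen' v' by simp
  moreover have "(extrel \<tau>)\<^sup>*\<^sup>* (v,u,w) (\<tau> c @ v'', c#u', w)" using r le
    by (simp add: rtranclp.rtrancl_into_rtrancl)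
  moreover have "completion \<tau> (\<tau> c @ v'', c#u', w) = completion \<tau> (v,u,w)"
    using comp_lext[OF sub] c v' by simp
  ultimately show ?case using l by (intro exI[of _ "\<tau> c @ v''"] exI[of _ "c#u'"]) simp
qed

lemma u_det:
  assumes sub: "substitution \<tau>" and gen: "generator \<tau> (v,u,w)" and k: "k < length u"
  shows "completion \<tau> (v,u,w) (- int k - 1) = rev u ! k"
proof -
  have "v \<noteq> []" using gen by (simp add: generator_def)
  then show ?thesis using comp_left[OF sub, of v k u 0 w] k by simp
qed

lemma w_det:
  assumes sub: "substitution \<tau>" and gen: "generator \<tau> (v,u,w)" and j: "j < length w"
  shows "completion \<tau> (v,u,w) (int j) = w ! j"
proof -
  have "w \<noteq> []" using gen by (simp add: generator_def)
  moreover have "right_word \<tau> w 1 = w" using rw_Suc'[of \<tau> w 0] by simp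
  ultimately show ?thesis using comp_right[OF sub, of w j 1 v u] j by simp
qed

lemma same_G:
  assumes sub: "substitution \<tau>" and prim: "primitive \<tau>" and inf: "infinite (shift_space \<tau>)"
    and gen1: "generator \<tau> g1" and gen2: "generator \<tau> g2"
    and eq: "completion \<tau> g1 = completion \<tau> g2"
  shows "G_related \<tau> g1 g2"
proof -
  obtain v1 u1 w1 where g1: "g1 = (v1,u1,w1)" by (cases g1) auto
  obtain v2 u2 w2 where g2: "g2 = (v2,u2,w2)" by (cases g2) auto
  define L where "L = max (length u1) (length u2)"
  obtain v1' u1' where r1: "(extrel \<tau>)\<^sup>*\<^sup>* g1 (v1',u1',w1)" and ge1: "generator \<tau> (v1',u1',w1)"
    and l1: "length u1' = L" and c1: "completion \<tau> (v1',u1',w1) = completion \<tau> g1"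
    using lext_n[OF sub gen1[unfolded g1], of "L - length u1"] g1 L_def by auto
  obtain v2' u2' where r2: "(extrel \<tau>)\<^sup>*\<^sup>* g2 (v2',u2',w2)" and ge2: "generator \<tau> (v2',u2',w2)"
    and l2: "length u2' = L" and c2: "completion \<tau> (v2',u2',w2) = completion \<tau> g2"
    using lext_n[OF sub gen2[unfolded g2], of "L - length u2"] g2 L_def by auto
  have ceq: "completion \<tau> (v1',u1',w1) = completion \<tau> (v2',u2',w2)" using c1 c2 eq by simp
  have "rev u1' = rev u2'"
  proof (rule nth_equalityI)
    show "length (rev u1') = length (rev u2')" using l1 l2 by simp
    fix k assume "k < length (rev u1')"
    then have k1: "k < length u1'" and k2: "k < length u2'" using l1 l2 by auto
    show "rev u1' ! k = rev u2' ! k"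
      using u_det[OF sub ge1 k1] u_det[OF sub ge2 k2] ceq by simp
  qed
  then have ueq: "u1' = u2'" by simp
  have lw: "length w1 = length w2"
  proof (rule ccontr)
    assume "length w1 \<noteq> length w2"
    then consider "length w2 < length w1" | "length w1 < length w2" by linarith
    then have "finite (shift_space \<tau>)"
    proof cases
      case 1 then show ?thesis using contra[OF sub prim ge1 ge2 ceq] by simp
    next
      case 2 then show ?thesis using contra[OF sub prim ge2 ge1 ceq[symmetric]] by simp
    qed
    then show False using inf by simp
  qed
  have weq: "w1 = w2"
  proof (rule nth_equalityI)
    show "length w1 = length w2" by (rule lw)
    fix j assume j: "j < length w1"
    show "w1 ! j = w2 ! j" using w_det[OF sub ge1 j] w_det[OF sub ge2] j lw ceq by simp
  qed
  have "subst_word \<tau> u1' = v1' @ u1' @ w1" "subst_word \<tau> u2' = v2' @ u2' @ w2"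
    using ge1 ge2 by (auto simp: generator_def)
  then have veq: "v1' = v2'" using ueq weq by simp
  show ?thesis unfolding G_related_def using r1 r2 ueq weq veq by blast
qed

theorem mainTheorem5:
  fixes \<tau> :: "'a::finite \<Rightarrow> 'a list"
    and g1 g2 :: "'a list \<times> 'a list \<times> 'a list"
  assumes "substitution \<tau>"
    and "primitive \<tau>"
    and "aperiodic \<tau>"
    and "generator \<tau> g1"
    and "generator \<tau> g2"
  shows "orbit_equiv (completion \<tau> g1) (completion \<tau> g2) \<longleftrightarrow> G_related \<tau> g1 g2"
proof
  assume "G_related \<tau> g1 g2"
  then obtain g3 where r1: "(extrel \<tau>)\<^sup>*\<^sup>* g1 g3" and r2: "(extrel \<tau>)\<^sup>*\<^sup>* g2 g3"
    unfolding G_related_def by blast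
  obtain n1 where n1: "\<forall>i. completion \<tau> g3 i = completion \<tau> g1 (i + int n1)"
    using ext_comp[OF assms(1) r1 assms(4)] by blast
  obtain n2 where n2: "\<forall>i. completion \<tau> g3 i = completion \<tau> g2 (i + int n2)"
    using ext_comp[OF assms(1) r2 assms(5)] by blast
  have "completion \<tau> g1 i = completion \<tau> g2 (i + (int n2 - int n1))" for i
  proof -
    have "completion \<tau> g1 i = completion \<tau> g1 ((i - int n1) + int n1)" by simp
    also have "\<dots> = completion \<tau> g3 (i - int n1)" using n1 by simp
    also have "\<dots> = completion \<tau> g2 ((i - int n1) + int n2)" using n2 by simp
    finally show ?thesis by (simp add: algebra_simps)
  qed
  then show "orbit_equiv (completion \<tau> g1) (completion \<tau> g2)" unfolding orbit_equiv_def by blast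
next
  assume "orbit_equiv (completion \<tau> g1) (completion \<tau> g2)"
  then obtain m where m: "\<forall>i. completion \<tau> g1 i = completion \<tau> g2 (i + m)"
    unfolding orbit_equiv_def by blast
  have inf: "infinite (shift_space \<tau>)" using assms(3) by (simp add: aperiodic_def)
  show "G_related \<tau> g1 g2"
  proof (cases "m \<ge> 0")
    case True
    obtain g2' where r: "(extrel \<tau>)\<^sup>*\<^sup>* g2 g2'" and ge: "generator \<tau> g2'"
      and sh: "\<forall>i. completion \<tau> g2' i = completion \<tau> g2 (i + int (nat m))"
      using rext_n[OF assms(1) assms(5)] by blast
    have "completion \<tau> g1 = completion \<tau> g2'" using m sh True by auto
    then have "G_related \<tau> g1 g2'" using same_G[OF assms(1,2) inf assms(4) ge] by blast
    then obtain g3 where "(extrel \<tau>)\<^sup>*\<^sup>* g1 g3" "(extrel \<tau>)\<^sup>*\<^sup>* g2' g3"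
      unfolding G_related_def by blast
    then show ?thesis unfolding G_related_def using r by (meson rtranclp_trans)
  next
    case False
    obtain g1' where r: "(extrel \<tau>)\<^sup>*\<^sup>* g1 g1'" and ge: "generator \<tau> g1'"
      and sh: "\<forall>i. completion \<tau> g1' i = completion \<tau> g1 (i + int (nat (- m)))"
      using rext_n[OF assms(1) assms(4)] by blast
    have "completion \<tau> g1' = completion \<tau> g2"
    proof
      fix i
      have "completion \<tau> g1' i = completion \<tau> g1 (i - m)" using sh False by simp
      also have "\<dots> = completion \<tau> g2 i" using m by (metis diff_add_cancel)
      finally show "completion \<tau> g1' i = completion \<tau> g2 i" .
    qed
    then have "G_related \<tau> g1' g2" using same_G[OF assms(1,2) inf ge assms(5)] by blast
    then obtain g3 where "(extrel \<tau>)\<^sup>*\<^sup>* g1' g3" "(extrel \<tau>)\<^sup>*\<^sup>* g2 g3"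
      unfolding G_related_def by blast
    then show ?thesis unfolding G_related_def using r by (meson rtranclp_trans)
  qed
qed

end
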